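(* There is a positive constant $C$ such that for every real number $\lambda$ and every real $x\ge0$, $$\sum_{k=0}^\infty\frac{|H_k(\lambda)|}{k!}x^k\le C(1+x)^{1/2}\exp\Big(x^2+\frac{\lambda^2}{2}\Big),$$ where $H_k$ denotes the $k$-th Hermite polynomial.
   Context: The Hermite polynomials are $H_k(\lambda)=(-1)^ke^{\lambda^2}\frac{d^k}{d\lambda^k}\big(e^{-\lambda^2}\big)$, $k=0,1,2,\dots$; equivalently $\sum_{k\ge0}\frac{H_k(\lambda)}{k!}x^k=\exp(2\lambda x-x^2)$. *)

theory Defs
  imports "HOL-Analysis.Analysis"
begin

definition hermite :: "nat \<Rightarrow> real \<Rightarrow> real" where
  "hermite k l = (-1) ^ k * exp (l\<^sup>2) * (deriv ^^ k) (\<lambda>t. exp (- t\<^sup>2)) l"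

end

theory Submission
  imports Defs "HOL-Complex_Analysis.Complex_Analysis" "HOL-Computational_Algebra.Polynomial"
begin


fun hp :: "nat \<Rightarrow> real poly" where
  "hp 0 = 1"
| "hp (Suc k) = pderiv (hp k) - pCons 0 (smult 2 (hp k))"

lemma hp_deriv_real:
  "(deriv ^^ k) (\<lambda>t. exp (- t\<^sup>2)) = (\<lambda>t::real. poly (hp k) t * exp (- t\<^sup>2))"
proof (induction k)
  case 0 then show ?case by simp
next
  case (Suc k)
  show ?case
  proof
    fix t :: real
    have "((\<lambda>t. poly (hp k) t * exp (- t\<^sup>2)) has_real_derivative
           poly (pderiv (hp k)) t * exp (- t\<^sup>2) + poly (hp k) t * (exp (- t\<^sup>2) * (- (2 * t)))) (at t)"
      by (auto intro!: derivative_eq_intros simp: power2_eq_square)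
    then have "deriv (\<lambda>t. poly (hp k) t * exp (- t\<^sup>2)) t =  poly (hp (Suc k)) t * exp (- t\<^sup>2)"
      by (simp add: DERIV_imp_deriv algebra_simps)
    then show "(deriv ^^ Suc k) (\<lambda>t. exp (- t\<^sup>2)) t = poly (hp (Suc k)) t * exp (- t\<^sup>2)"
      using Suc by simp
  qed
qed

lemma hermite_hp: "hermite k l = (-1)^k * poly (hp k) l"
  by (simp add: hermite_def hp_deriv_real exp_minus_inverse mult.assoc[symmetric])

lemma hp_coeff_parity: "odd (i + k) \<Longrightarrow> coeff (hp k) i = 0"
proof (induction k arbitrary: i)
  case 0 then show ?case by (cases i) (auto simp add: coeff_1)
next
  case (Suc k)
  show ?case
  proof (cases i)
    case 0 then show ?thesis using Suc by (simp add: coeff_pderiv)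
  next
    case (Suc j)
    then show ?thesis using Suc.IH Suc.prems by (simp add: coeff_pderiv)
  qed
qed

lemma hp_parity: "poly (hp k) (- t) = (-1)^k * poly (hp k) t"
proof -
  have "poly (hp k) (- t) = (\<Sum>i\<le>degree (hp k). coeff (hp k) i * (-t) ^ i)"
    by (simp add: poly_altdef)
  also have "\<dots> = (\<Sum>i\<le>degree (hp k). (-1)^k * (coeff (hp k) i * t ^ i))"
  proof (rule sum.cong)
    fix i assume "i \<in> {..degree (hp k)}"
    show "coeff (hp k) i * (-t) ^ i = (-1)^k * (coeff (hp k) i * t ^ i)"
    proof (cases "odd (i + k)")
      case True then show ?thesis by (simp add: hp_coeff_parity)
    next
      case False
      then have "(-1::real)^i = (-1)^k"
        by (metis even_add neg_one_even_power neg_one_odd_power)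
      then show ?thesis by (simp add: power_minus[of t] )
    qed
  qed simp
  also have "\<dots> = (-1)^k * poly (hp k) t"
    by (simp add: poly_altdef sum_distrib_left)
  finally show ?thesis .
qed

definition hpc :: "nat \<Rightarrow> complex poly" where "hpc k = map_poly of_real (hp k)"

lemma pderiv_map_of_real: "pderiv (map_poly of_real p) = map_poly (of_real :: real \<Rightarrow> complex) (pderiv p)"
  by (rule poly_eqI) (simp add: coeff_pderiv coeff_map_poly)

lemma hpc_Suc: "hpc (Suc k) = pderiv (hpc k) - pCons 0 (smult 2 (hpc k))"
  unfolding hpc_def
  by (rule poly_eqI) (simp add: coeff_pderiv coeff_map_poly coeff_pCons split: nat.splits)

lemma poly_hpc: "poly (hpc k) (of_real x) = of_real (poly (hp k) x)"
  by (simp add: hpc_def poly_altdef degree_map_poly coeff_map_poly)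

lemma hpc_deriv:
  fixes c :: complex
  shows "(deriv ^^ k) (\<lambda>z. exp (2*c*z - z\<^sup>2)) = (\<lambda>z. poly (hpc k) (z - c) * exp (2*c*z - z\<^sup>2))"
proof (induction k)
  case 0 then show ?case by (simp add: hpc_def)
next
  case (Suc k)
  show ?case
  proof
    fix z :: complex
    have "((\<lambda>z. poly (hpc k) (z - c) * exp (2*c*z - z\<^sup>2)) has_field_derivative
           poly (pderiv (hpc k)) (z - c) * exp (2*c*z - z\<^sup>2) + poly (hpc k) (z - c) * (exp (2*c*z - z\<^sup>2) * (2*c - 2*z))) (at z)"
      by (auto intro!: derivative_eq_intros simp: power2_eq_square)
    then have "deriv (\<lambda>z. poly (hpc k) (z - c) * exp (2*c*z - z\<^sup>2)) z = poly (hpc (Suc k)) (z - c) * exp (2*c*z - z\<^sup>2)"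
      by (simp add: DERIV_imp_deriv algebra_simps hpc_Suc)
    then show "(deriv ^^ Suc k) (\<lambda>z. exp (2*c*z - z\<^sup>2)) z = poly (hpc (Suc k)) (z - c) * exp (2*c*z - z\<^sup>2)"
      using Suc by simp
  qed
qed

lemma hermite_complex_deriv:
  "(deriv ^^ k) (\<lambda>z. exp (2 * of_real l * z - z\<^sup>2)) 0 = complex_of_real (hermite k l)"
proof -
  have "(deriv ^^ k) (\<lambda>z. exp (2 * of_real l * z - z\<^sup>2)) 0 = poly (hpc k) (of_real (-l))"
    by (simp add: hpc_deriv)
  also have "\<dots> = of_real (hermite k l)"
    by (simp only: poly_hpc hp_parity hermite_hp)
  finally show ?thesis .
qed


lemma circ_eq: "circlepath 0 r t = complex_of_real r * cis (2*pi*t)"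
  by (simp add: circlepath cis_conv_exp mult_ac)

lemma norm_f_circ:
  "norm (exp (2 * complex_of_real l * (complex_of_real r * cis \<phi>) - (complex_of_real r * cis \<phi>)\<^sup>2))
     = exp (2*l*r*cos \<phi> - r\<^sup>2 * cos (2*\<phi>))"
proof -
  have "(complex_of_real r * cis \<phi>)\<^sup>2 = complex_of_real (r\<^sup>2) * cis (2*\<phi>)"
  proof -
    have c2: "(cis \<phi>)^2 = cis (2*\<phi>)" using Complex.DeMoivre[of \<phi> 2] by (simp only: of_nat_numeral)
    show ?thesis by (simp only: power_mult_distrib c2 of_real_power)
  qed
  then show ?thesis by (simp add: mult_ac)
qed

lemma cauchy_step:
  assumes r: "r > 0"
  shows "\<bar>hermite k l\<bar> * (2*pi) / fact k
     \<le> integral {0..1} (\<lambda>t. exp (2*l*r*cos (2*pi*t) - r\<^sup>2 * cos (2*(2*pi*t))) * (2*pi) / r^k)"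
proof -
  define f where "f = (\<lambda>z. exp (2 * complex_of_real l * z - z\<^sup>2))"
  define I where "I = (2 * pi * \<i>) / (fact k) * (deriv ^^ k) f 0"
  have "((\<lambda>u. f u / (u-0) ^ (Suc k)) has_contour_integral I) (circlepath 0 r)"
    unfolding I_def
    by (rule Cauchy_has_contour_integral_higher_derivative_circlepath)
       (auto simp: f_def r intro!: continuous_intros holomorphic_intros)
  then have hI: "((\<lambda>t. f (circlepath 0 r t) / (circlepath 0 r t) ^ Suc k *
        vector_derivative (circlepath 0 r) (at t within {0..1})) has_integral I) {0..1}"
    by (simp add: has_contour_integral_def)
  define h where "h = (\<lambda>t. f (circlepath 0 r t) / (circlepath 0 r t) ^ Suc k *
        (2 * pi * \<i> * r * exp(2 * of_real pi * \<i> * t)))"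
  have hI': "(h has_integral I) {0..1}"
    using hI unfolding h_def
    by (rule has_integral_eq[rotated]) (simp add: vector_derivative_circlepath01)
  define J where "J = (\<lambda>t. exp (2*l*r*cos (2*pi*t) - r\<^sup>2 * cos (2*(2*pi*t))) * (2*pi) / r^k)"
  have Jint: "J integrable_on {0..1}"
    unfolding J_def using r by (intro integrable_continuous_interval continuous_intros) auto
  have nh: "norm (h t) = J t" for t
  proof -
    have e: "exp(2 * of_real pi * \<i> * t) = cis (2*pi*t)"
      by (simp add: cis_conv_exp mult_ac)
    have "norm (h t) = norm (f (circlepath 0 r t)) / r ^ Suc k * (2*pi*r)"
      unfolding h_def e using r
      by (simp add: norm_mult norm_divide norm_power circ_eq)
    also have "\<dots> = J t"
      unfolding f_def circ_eq norm_f_circ J_def using r by (simp add: field_simps)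
    finally show ?thesis .
  qed
  have "norm (integral {0..1} h) \<le> integral {0..1} J"
    by (rule integral_norm_bound_integral) (use hI' Jint nh in auto)
  moreover have "integral {0..1} h = I" using hI' by (rule integral_unique)
  moreover have "norm I = \<bar>hermite k l\<bar> * (2*pi) / fact k"
    unfolding I_def f_def hermite_complex_deriv by (simp add: norm_mult norm_divide)
  ultimately show ?thesis unfolding J_def by simp
qed


lemma sin_ge_third:
  fixes x :: real assumes "0 \<le> x" "x \<le> pi/2" shows "x/3 \<le> sin x"
proof (cases "x \<le> pi/3")
  case True
  have "(\<lambda>y. sin y - y/3) 0 \<le> (\<lambda>y. sin y - y/3) x"
  proof (rule DERIV_nonneg_imp_nondecreasing[OF assms(1)])
    fix y assume y: "0 \<le> y" "y \<le> x"
    have "cos (pi/3) \<le> cos y" using y True by (intro cos_monotone_0_pi_le) auto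
    then have "cos y \<ge> 1/2" by (simp add: cos_60)
    then show "\<exists>d. ((\<lambda>y. sin y - y/3) has_real_derivative d) (at y) \<and> d \<ge> 0"
      by (intro exI[of _ "cos y - 1/3"]) (auto intro!: derivative_eq_intros)
  qed
  then show ?thesis by simp
next
  case False
  have "sin (pi/3) \<le> sin x" using False assms by (intro sin_monotone_2pi_le) auto
  moreover have "sqrt 3 \<ge> 4/3"
  proof -
    have "sqrt (16/9) \<le> sqrt 3" by (subst real_sqrt_le_iff) simp
    moreover have "sqrt (16/9) = 4/3" by (simp add: real_sqrt_divide)
    ultimately show ?thesis by simp
  qed
  moreover have "pi < 4" by (rule pi_less_4)
  ultimately show ?thesis using assms by (simp add: sin_60)
qed

lemma cos_gap:
  fixes \<phi> \<psi> :: real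
  assumes "0 \<le> \<phi>" "\<phi> \<le> pi" "0 \<le> \<psi>" "\<psi> \<le> pi"
  shows "(\<phi> - \<psi>)\<^sup>2 / 18 \<le> \<bar>cos \<phi> - cos \<psi>\<bar>"
proof -
  define d where "d = \<bar>\<phi> - \<psi>\<bar>"
  have d: "0 \<le> d" "d \<le> pi" using assms by (auto simp: d_def)
  have s1: "\<bar>sin ((\<psi> - \<phi>)/2)\<bar> = sin (d/2)"
  proof (cases "\<psi> \<ge> \<phi>")
    case True
    then have "(\<psi> - \<phi>)/2 = d/2" by (simp add: d_def)
    moreover have "sin (d/2) \<ge> 0" using d by (intro sin_ge_zero) auto
    ultimately show ?thesis by (metis abs_of_nonneg)
  next
    case False
    then have "(\<psi> - \<phi>)/2 = -(d/2)" by (simp add: d_def abs_if field_simps)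
    moreover have "sin (d/2) \<ge> 0" using d by (intro sin_ge_zero) auto
    ultimately show ?thesis by simp
  qed
  have s2: "sin (d/2) \<le> sin ((\<phi> + \<psi>)/2)"
  proof (cases "(\<phi> + \<psi>)/2 \<le> pi/2")
    case True
    show ?thesis using True d assms by (intro sin_monotone_2pi_le) (auto simp: d_def)
  next
    case False
    have "sin ((\<phi> + \<psi>)/2) = sin (pi - (\<phi> + \<psi>)/2)" by simp
    moreover have "sin (d/2) \<le> sin (pi - (\<phi> + \<psi>)/2)"
      using False d assms by (intro sin_monotone_2pi_le) (auto simp: d_def abs_if field_simps)
    ultimately show ?thesis by simp
  qed
  have s3: "d/6 \<le> sin (d/2)" using sin_ge_third[of "d/2"] d by simp
  have "\<bar>cos \<phi> - cos \<psi>\<bar> = 2 * \<bar>sin ((\<phi> + \<psi>)/2)\<bar> * \<bar>sin ((\<psi> - \<phi>)/2)\<bar>"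
    by (simp add: cos_diff_cos abs_mult)
  also have "\<dots> = 2 * sin ((\<phi> + \<psi>)/2) * sin (d/2)"
    using s1 s2 s3 d by simp
  also have "\<dots> \<ge> 2 * (d/6) * (d/6)"
    using s2 s3 d by (intro mult_mono) auto
  finally have "2 * (d/6) * (d/6) \<le> \<bar>cos \<phi> - cos \<psi>\<bar>" .
  moreover have "(\<phi> - \<psi>)\<^sup>2 = d * d" by (simp add: d_def power2_eq_square abs_mult_self_eq)
  ultimately show ?thesis by simp
qed

lemma exp_neg_sq_bound:
  fixes v :: real assumes "0 \<le> v" shows "exp (- (v\<^sup>2)) \<le> 2 / (1 + v)"
proof -
  have "1 + v\<^sup>2 \<le> exp (v\<^sup>2)" by (rule exp_ge_add_one_self)
  moreover have "1 + v \<le> 2 + 2 * v\<^sup>2"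
  proof -
    have "0 \<le> (v - 1/4)*(v - 1/4)" by simp
    moreover have "(v - 1/4)*(v - 1/4) = v * v - v/2 + 1/16" by (simp add: algebra_simps)
    ultimately show ?thesis unfolding power2_eq_square by (simp add: algebra_simps)
  qed
  ultimately have "1 + v \<le> 2 * exp (v\<^sup>2)" by linarith
  then show ?thesis using assms by (simp add: exp_minus field_simps)
qed

definition clampa :: "real \<Rightarrow> real" where "clampa c = arccos (max (-1) (min 1 c))"

lemma clampa_range: "0 \<le> clampa c" "clampa c \<le> pi"
  unfolding clampa_def by (auto intro!: arccos_lbound arccos_ubound)

lemma pointwise_phi:
  fixes r :: real
  assumes r: "r > 0" and \<phi>: "0 \<le> \<phi>" "\<phi> \<le> pi"
  shows "exp (- (2 * r\<^sup>2 * (cos \<phi> - c0)\<^sup>2)) \<le> 2 / (1 + r * (\<phi> - clampa c0)\<^sup>2 / 13)"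
proof -
  define c1 where "c1 = max (-1) (min 1 c0)"
  have cc: "cos (clampa c0) = c1" unfolding clampa_def c1_def by (intro cos_arccos) auto
  have "\<bar>cos \<phi> - c1\<bar> \<le> \<bar>cos \<phi> - c0\<bar>"
    using cos_ge_minus_one[of \<phi>] cos_le_one[of \<phi>] unfolding c1_def by linarith
  moreover have "(\<phi> - clampa c0)\<^sup>2 / 18 \<le> \<bar>cos \<phi> - cos (clampa c0)\<bar>"
    using \<phi> clampa_range by (intro cos_gap) auto
  ultimately have e: "(\<phi> - clampa c0)\<^sup>2 / 18 \<le> \<bar>cos \<phi> - c0\<bar>" using cc by simp
  define u where "u = (\<phi> - clampa c0)\<^sup>2"
  define v where "v = r * u / 13"
  have u0: "u \<ge> 0" by (simp add: u_def)
  have "(u/18)\<^sup>2 \<le> (cos \<phi> - c0)\<^sup>2"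
    using e u0 unfolding u_def by (metis abs_le_square_iff abs_of_nonneg divide_nonneg_nonneg zero_le_numeral power2_abs)
  then have "2 * r\<^sup>2 * (u/18)\<^sup>2 \<le> 2 * r\<^sup>2 * (cos \<phi> - c0)\<^sup>2"
    using r by (intro mult_left_mono) auto
  moreover have "v\<^sup>2 \<le> 2 * r\<^sup>2 * (u/18)\<^sup>2"
    unfolding v_def using u0 r by (simp add: power2_eq_square field_simps)
  ultimately have "exp (- (2 * r\<^sup>2 * (cos \<phi> - c0)\<^sup>2)) \<le> exp (- (v\<^sup>2))" by simp
  also have "\<dots> \<le> 2 / (1 + v)" using r u0 by (intro exp_neg_sq_bound) (simp add: v_def)
  finally show ?thesis by (simp add: v_def u_def)
qed


definition GG :: "real \<Rightarrow> real \<Rightarrow> real" where "GG r u = 2 / (1 + r * u\<^sup>2 / 13)"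

lemma exponent_identity:
  fixes r l x :: real assumes r: "r > 0"
  shows "2*l*r*cos x - r\<^sup>2 * cos (2*x) = (r\<^sup>2 + l\<^sup>2/2) + (- (2 * r\<^sup>2 * (cos x - l/(2*r))\<^sup>2))"
proof -
  have e: "cos (2*x) = 2 * (cos x)^2 - 1" by (rule cos_double_cos)
  have "2*l*r*c - r\<^sup>2 * (2 * c^2 - 1) = (r\<^sup>2 + l\<^sup>2/2) + (- (2 * r\<^sup>2 * (c - l/(2*r))\<^sup>2))" for c
    using r by (simp add: power2_eq_square field_simps)
  then show ?thesis unfolding e .
qed

lemma J0_bound:
  fixes r l t :: real
  assumes r: "r > 0" and t: "0 \<le> t" "t \<le> 1"
  shows "exp (2*l*r*cos (2*pi*t) - r\<^sup>2 * cos (2*(2*pi*t)))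
     \<le> exp (r\<^sup>2 + l\<^sup>2/2) * (GG r (2*pi*t - clampa (l/(2*r))) + GG r (2*pi - 2*pi*t - clampa (l/(2*r))))"
proof -
  define c0 where "c0 = l/(2*r)"
  define E where "E = exp (r\<^sup>2 + l\<^sup>2/2)"
  have GG0: "GG r u \<ge> 0" for u
  proof -
    have "0 \<le> r * u\<^sup>2 / 13" using r by simp
    then show ?thesis unfolding GG_def by simp
  qed
  have eq: "exp (2*l*r*cos x - r\<^sup>2 * cos (2*x)) = E * exp (- (2 * r\<^sup>2 * (cos x - c0)\<^sup>2))" for x
    unfolding exponent_identity[OF r] exp_add E_def c0_def ..
  have E0: "E > 0" by (simp add: E_def)
  show ?thesis
  proof (cases "2*pi*t \<le> pi")
    case True
    have "exp (- (2 * r\<^sup>2 * (cos (2*pi*t) - c0)\<^sup>2)) \<le> GG r (2*pi*t - clampa c0)"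
      unfolding GG_def using True t by (intro pointwise_phi r) auto
    also have "\<dots> \<le> GG r (2*pi*t - clampa c0) + GG r (2*pi - 2*pi*t - clampa c0)" using GG0 by simp
    finally show ?thesis unfolding eq c0_def[symmetric] E_def[symmetric] using E0 by simp
  next
    case False
    have c: "cos (2*pi*t) = cos (2*pi - 2*pi*t)" by simp
    have "exp (- (2 * r\<^sup>2 * (cos (2*pi*t) - c0)\<^sup>2)) \<le> GG r (2*pi - 2*pi*t - clampa c0)"
      unfolding GG_def c using False t by (intro pointwise_phi r) auto
    also have "\<dots> \<le> GG r (2*pi*t - clampa c0) + GG r (2*pi - 2*pi*t - clampa c0)" using GG0 by simp
    finally show ?thesis unfolding eq c0_def[symmetric] E_def[symmetric] using E0 by simp
  qed
qed

lemma GG_alt: "r > 0 \<Longrightarrow> GG r u = 2 / (1 + (sqrt (r/13) * u)\<^sup>2)"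
  unfolding GG_def by (simp add: power_mult_distrib)

lemma deriv_simp:
  fixes a Z :: real assumes a: "a > 0" and Z: "Z \<ge> 0"
  shows "inverse (1 + Z) * (a * (2*pi)) / (pi * a) = 2 / (1 + Z)"
proof -
  have "a * (2*pi) / (pi * a) = 2" using a pi_gt_zero by simp
  then have "inverse (1 + Z) * (a * (2*pi)) / (pi * a) = inverse (1 + Z) * 2"
    by (metis times_divide_eq_right)
  then show ?thesis by (simp add: divide_inverse)
qed

definition F1 :: "real \<Rightarrow> real \<Rightarrow> real \<Rightarrow> real" where
  "F1 r p t = arctan (sqrt (r/13) * (2*pi*t - p)) / (pi * sqrt (r/13))"
definition F2 :: "real \<Rightarrow> real \<Rightarrow> real \<Rightarrow> real" where
  "F2 r p t = - arctan (sqrt (r/13) * (2*pi - 2*pi*t - p)) / (pi * sqrt (r/13))"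

lemma int_G1:
  fixes r p :: real assumes r: "r > 0"
  shows "((\<lambda>t. GG r (2*pi*t - p)) has_integral (F1 r p 1 - F1 r p 0)) {0..1}"
proof (rule fundamental_theorem_of_calculus[of 0 1 "F1 r p"])
  fix x :: real assume "x \<in> {0..1}"
  define a where "a = sqrt (r/13)"
  have a: "a > 0" using r by (simp add: a_def)
  have g: "((\<lambda>t. a * (2*pi*t - p)) has_real_derivative a * (2*pi)) (at x)"
    by (auto intro!: derivative_eq_intros)
  have "((\<lambda>t. arctan (a * (2*pi*t - p)) / (pi * a)) has_real_derivative
        inverse (1 + (a * (2*pi*x - p))\<^sup>2) * (a * (2*pi)) / (pi * a)) (at x)"
    by (rule DERIV_cdivide, rule DERIV_chain2[OF DERIV_arctan g])
  moreover have "inverse (1 + (a * (2*pi*x - p))\<^sup>2) * (a * (2*pi)) / (pi * a) = GG r (2*pi*x - p)"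
    unfolding GG_alt[OF r] a_def[symmetric] using a by (intro deriv_simp) auto
  ultimately have "(F1 r p has_real_derivative GG r (2*pi*x - p)) (at x)"
    unfolding F1_def a_def[symmetric] by (simp only: )
  then show "(F1 r p has_vector_derivative GG r (2*pi*x - p)) (at x within {0..1})"
    unfolding has_real_derivative_iff_has_vector_derivative[symmetric]
    by (rule has_field_derivative_at_within)
qed simp

lemma int_G2:
  fixes r p :: real assumes r: "r > 0"
  shows "((\<lambda>t. GG r (2*pi - 2*pi*t - p)) has_integral (F2 r p 1 - F2 r p 0)) {0..1}"
proof (rule fundamental_theorem_of_calculus[of 0 1 "F2 r p"])
  fix x :: real assume "x \<in> {0..1}"
  define a where "a = sqrt (r/13)"
  have a: "a > 0" using r by (simp add: a_def)
  have g: "((\<lambda>t. a * (2*pi - 2*pi*t - p)) has_real_derivative a * (- (2*pi))) (at x)"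
    by (auto intro!: derivative_eq_intros)
  have "((\<lambda>t. - arctan (a * (2*pi - 2*pi*t - p)) / (pi * a)) has_real_derivative
        - (inverse (1 + (a * (2*pi - 2*pi*x - p))\<^sup>2) * (a * (- (2*pi)))) / (pi * a)) (at x)"
    by (rule DERIV_cdivide, rule DERIV_minus, rule DERIV_chain2[OF DERIV_arctan g])
  moreover have "- (inverse (1 + (a * (2*pi - 2*pi*x - p))\<^sup>2) * (a * (- (2*pi)))) / (pi * a) = GG r (2*pi - 2*pi*x - p)"
  proof -
    have "- (inverse (1 + (a * (2*pi - 2*pi*x - p))\<^sup>2) * (a * (- (2*pi)))) / (pi * a)
       = inverse (1 + (a * (2*pi - 2*pi*x - p))\<^sup>2) * (a * (2*pi)) / (pi * a)"
      by (simp only: mult_minus_right minus_minus)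
    also have "\<dots> = 2 / (1 + (a * (2*pi - 2*pi*x - p))\<^sup>2)" using a by (intro deriv_simp) auto
    finally show ?thesis unfolding GG_alt[OF r] a_def .
  qed
  ultimately have "(F2 r p has_real_derivative GG r (2*pi - 2*pi*x - p)) (at x)"
    unfolding F2_def a_def[symmetric] by (simp only: )
  then show "(F2 r p has_vector_derivative GG r (2*pi - 2*pi*x - p)) (at x within {0..1})"
    unfolding has_real_derivative_iff_has_vector_derivative[symmetric]
    by (rule has_field_derivative_at_within)
qed simp


lemma arctan_diff_le: "arctan x - arctan y \<le> pi"
  using arctan_bounded[of x] arctan_bounded[of y] by linarith

lemma F1_bound: "r > 0 \<Longrightarrow> F1 r p 1 - F1 r p 0 \<le> 1 / sqrt (r/13)"
proof -
  assume r: "r > 0"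
  define a where "a = sqrt (r/13)"
  have a: "a > 0" using r by (simp add: a_def)
  have "F1 r p 1 - F1 r p 0 = (arctan (a * (2*pi*1 - p)) - arctan (a * (2*pi*0 - p))) / (pi * a)"
    unfolding F1_def a_def by (simp add: diff_divide_distrib)
  also have "\<dots> \<le> pi / (pi * a)" using a by (intro divide_right_mono arctan_diff_le) auto
  finally show ?thesis using a by (simp add: a_def)
qed

lemma F2_bound: "r > 0 \<Longrightarrow> F2 r p 1 - F2 r p 0 \<le> 1 / sqrt (r/13)"
proof -
  assume r: "r > 0"
  define a where "a = sqrt (r/13)"
  have a: "a > 0" using r by (simp add: a_def)
  have "F2 r p 1 - F2 r p 0 = (arctan (a * (2*pi - 2*pi*0 - p)) - arctan (a * (2*pi - 2*pi*1 - p))) / (pi * a)"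
    unfolding F2_def a_def by (simp add: diff_divide_distrib)
  also have "\<dots> \<le> pi / (pi * a)" using a by (intro divide_right_mono arctan_diff_le) auto
  finally show ?thesis using a by (simp add: a_def)
qed

lemma hermite_bound:
  fixes r l :: real assumes r: "r > 0"
  shows "\<bar>hermite k l\<bar> / fact k \<le> 2 * exp (r\<^sup>2 + l\<^sup>2/2) / (sqrt (r/13) * r^k)"
proof -
  define p where "p = clampa (l/(2*r))"
  define a where "a = sqrt (r/13)"
  have a: "a > 0" using r by (simp add: a_def)
  define E where "E = exp (r\<^sup>2 + l\<^sup>2/2)"
  define J0 where "J0 = (\<lambda>t. exp (2*l*r*cos (2*pi*t) - r\<^sup>2 * cos (2*(2*pi*t))))"
  define V1 where "V1 = F1 r p 1 - F1 r p 0"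
  define V2 where "V2 = F2 r p 1 - F2 r p 0"
  have hG: "((\<lambda>t. E * (GG r (2*pi*t - p) + GG r (2*pi - 2*pi*t - p))) has_integral (E * (V1 + V2))) {0..1}"
    unfolding V1_def V2_def
    by (intro has_integral_mult_right has_integral_add int_G1 int_G2 r)
  have V1: "V1 \<le> 1/a" unfolding V1_def a_def by (rule F1_bound[OF r])
  have V2: "V2 \<le> 1/a" unfolding V2_def a_def by (rule F2_bound[OF r])
  have J0int: "J0 integrable_on {0..1}"
    unfolding J0_def by (intro integrable_continuous_interval continuous_intros)
  have "integral {0..1} J0 \<le> integral {0..1} (\<lambda>t. E * (GG r (2*pi*t - p) + GG r (2*pi - 2*pi*t - p)))"
    using hG J0int unfolding J0_def E_def p_def
    by (intro integral_le J0_bound r) auto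
  also have "\<dots> = E * (V1 + V2)" using hG by (rule integral_unique)
  also have "\<dots> \<le> E * (2/a)" using V1 V2 by (intro mult_left_mono) (auto simp: E_def)
  finally have IJ: "integral {0..1} J0 \<le> E * (2/a)" .
  have "\<bar>hermite k l\<bar> * (2*pi) / fact k \<le> integral {0..1} (\<lambda>t. J0 t * (2*pi) / r^k)"
    unfolding J0_def by (rule cauchy_step[OF r])
  also have "\<dots> = integral {0..1} J0 * (2*pi) / r^k" by simp
  also have "\<dots> \<le> E * (2/a) * (2*pi) / r^k" using IJ r by (intro divide_right_mono mult_right_mono) auto
  finally have "\<bar>hermite k l\<bar> * (2*pi) / fact k \<le> E * (2/a) * (2*pi) / r^k" .
  moreover have "\<bar>hermite k l\<bar> * (2*pi) / fact k = \<bar>hermite k l\<bar> / fact k * (2*pi)" by simp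
  moreover have "E * (2/a) * (2*pi) / r^k = 2 * E / (a * r^k) * (2*pi)" using a r by (simp add: field_simps)
  ultimately have "\<bar>hermite k l\<bar> / fact k * (2*pi) \<le> 2 * E / (a * r^k) * (2*pi)" by (simp only:)
  moreover have p2: "0 < 2*pi" by simp
  ultimately have "\<bar>hermite k l\<bar> / fact k \<le> 2 * E / (a * r^k)"
    by (rule mult_right_le_imp_le)
  then show ?thesis unfolding E_def a_def .
qed


lemma ln_lower:
  fixes y :: real assumes y: "0 \<le> y" shows "2*y/(2+y) \<le> ln (1+y)"
proof -
  have "(\<lambda>t. ln (1+t) - 2*t/(2+t)) 0 \<le> (\<lambda>t. ln (1+t) - 2*t/(2+t)) y"
  proof (rule DERIV_nonneg_imp_nondecreasing[OF y])
    fix t :: real assume t: "0 \<le> t" "t \<le> y"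
    have "((\<lambda>t. ln (1+t) - 2*t/(2+t)) has_real_derivative (1/(1+t) - 4/(2+t)^2)) (at t)"
      using t by (auto intro!: derivative_eq_intros simp: field_simps power2_eq_square)
    moreover have "1/(1+t) - 4/(2+t)^2 \<ge> 0"
    proof -
      have "4*(1+t) \<le> (2+t)^2" by (simp add: power2_eq_square algebra_simps)
      then have "4/(2+t)^2 \<le> 1/(1+t)" using t by (simp add: field_simps)
      then show ?thesis by simp
    qed
    ultimately show "\<exists>d. ((\<lambda>t. ln (1+t) - 2*t/(2+t)) has_real_derivative d) (at t) \<and> d \<ge> 0" by blast
  qed
  then show ?thesis by simp
qed

lemma e2_le:
  fixes k :: nat assumes k: "k \<ge> 1"
  shows "exp 2 * real k ^ (2*k+1) \<le> real (k+1) ^ (2*k+1)"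
proof -
  have kp: "real k > 0" using k by simp
  have "2 * (1/real k) / (2 + 1/real k) \<le> ln (1 + 1/real k)" by (rule ln_lower) simp
  moreover have "2 * (1/real k) / (2 + 1/real k) = 2 / (2*real k + 1)" using kp by (simp add: field_simps)
  ultimately have "2 \<le> real (2*k+1) * ln (1 + 1/real k)" using kp by (simp add: field_simps)
  then have "exp 2 \<le> exp (real (2*k+1) * ln (1 + 1/real k))" by simp
  also have "\<dots> = (1 + 1/real k) ^ (2*k+1)"
  proof -
    have p: "1 + 1/real k > 0" using kp by (intro add_pos_nonneg) auto
    show ?thesis by (subst exp_of_nat_mult) (simp only: exp_ln[OF p])
  qed
  finally have "exp 2 * real k ^ (2*k+1) \<le> (1 + 1/real k) ^ (2*k+1) * real k ^ (2*k+1)"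
    by (intro mult_right_mono) auto
  also have "\<dots> = ((1 + 1/real k) * real k) ^ (2*k+1)" by (simp add: power_mult_distrib)
  also have "(1 + 1/real k) * real k = real (k+1)" using kp by (simp add: field_simps)
  finally show ?thesis .
qed

lemma stirling2:
  fixes k :: nat assumes k: "k \<ge> 1"
  shows "(fact k)\<^sup>2 * exp (2 * real k) \<le> exp 2 * real k * real k ^ (2*k)"
  using k
proof (induction k rule: dec_induct)
  case base then show ?case by (simp add: power2_eq_square)
next
  case (step k)
  have IH: "(fact k)\<^sup>2 * exp (2 * real k) \<le> exp 2 * real k * real k ^ (2*k)" by (rule step.IH)
  have "(fact (Suc k))\<^sup>2 * exp (2 * real (Suc k)) = (real (k+1))^2 * exp 2 * ((fact k)\<^sup>2 * exp (2 * real k))"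
    by (simp add: power2_eq_square algebra_simps exp_add[symmetric])
  also have "\<dots> \<le> (real (k+1))^2 * exp 2 * (exp 2 * real k * real k ^ (2*k))"
    using IH by (intro mult_left_mono) auto
  also have "\<dots> = (real (k+1))^2 * exp 2 * (exp 2 * real k ^ (2*k+1))" by (simp add: algebra_simps)
  also have "\<dots> \<le> (real (k+1))^2 * exp 2 * (real (k+1) ^ (2*k+1))"
    using e2_le[OF step.hyps(1)] by (intro mult_left_mono) auto
  also have "\<dots> = exp 2 * real (Suc k) * real (Suc k) ^ (2 * Suc k)"
    by (simp add: power2_eq_square algebra_simps)
  finally show ?case .
qed


lemma key_K:
  fixes k :: nat assumes k: "k \<ge> 1"
  shows "52 * exp (real k) * fact k \<le> 256 * sqrt (real k / 2) * real k ^ k"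
proof (rule power2_le_imp_le)
  have e2: "exp (2::real) \<le> 9"
  proof -
    have "exp (2::real) = exp 1 * exp 1" by (simp add: exp_add[symmetric])
    also have "\<dots> \<le> 3 * 3" using exp_le by (intro mult_mono) auto
    finally show ?thesis by simp
  qed
  have "(52 * exp (real k) * fact k)\<^sup>2 = 2704 * ((fact k)\<^sup>2 * exp (2 * real k))"
    by (simp add: power2_eq_square exp_add[symmetric] algebra_simps)
  also have "\<dots> \<le> 2704 * (exp 2 * real k * real k ^ (2*k))"
    using stirling2[OF k] by simp
  also have "\<dots> \<le> 2704 * (9 * real k * real k ^ (2*k))"
    using e2 by (intro mult_left_mono mult_right_mono) auto
  also have "\<dots> = 24336 * (real k * real k ^ (2*k))" by (simp only: mult.assoc)
  also have "\<dots> \<le> 32768 * (real k * real k ^ (2*k))" by (intro mult_right_mono) auto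
  also have "\<dots> = (256 * sqrt (real k / 2) * real k ^ k)\<^sup>2"
  proof -
    have s: "(sqrt (real k / 2))\<^sup>2 = real k / 2" by simp
    have t: "(real k ^ k)\<^sup>2 = real k ^ (2*k)" by (simp add: power_mult[symmetric] mult.commute)
    have "(256 * sqrt (real k / 2) * real k ^ k)\<^sup>2 = 65536 * (sqrt (real k / 2))\<^sup>2 * (real k ^ k)\<^sup>2"
      by (simp only: power_mult_distrib) simp
    also have "\<dots> = 32768 * (real k * real k ^ (2*k))" unfolding s t by simp
    finally show ?thesis by simp
  qed
  finally show "(52 * exp (real k) * fact k)\<^sup>2 \<le> (256 * sqrt (real k / 2) * real k ^ k)\<^sup>2" .
  show "0 \<le> 256 * sqrt (real k / 2) * real k ^ k" by simp
qed

lemma term_bound: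
  fixes x l :: real and k :: nat
  assumes x: "x \<ge> 0" and k: "k \<ge> 1"
  shows "\<bar>hermite k l\<bar> / fact k * x^k \<le> 16 * exp (l\<^sup>2/2) * sqrt ((2*x\<^sup>2)^k / fact k)"
proof -
  define r where "r = sqrt (real k / 2)"
  have r: "r > 0" using k by (simp add: r_def)
  have r2: "r\<^sup>2 = real k / 2" by (simp add: r_def)
  define A where "A = 2 * exp (r\<^sup>2) * x^k / (sqrt (r/13) * r^k)"
  have A0: "A \<ge> 0" using x r by (simp add: A_def)
  have "\<bar>hermite k l\<bar> / fact k * x^k \<le> 2 * exp (r\<^sup>2 + l\<^sup>2/2) / (sqrt (r/13) * r^k) * x^k"
    using hermite_bound[OF r, of k l] x by (intro mult_right_mono) auto
  also have "\<dots> = exp (l\<^sup>2/2) * A" by (simp add: A_def exp_add)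
  finally have step1: "\<bar>hermite k l\<bar> / fact k * x^k \<le> exp (l\<^sup>2/2) * A" .
  have kp: "real k > 0" using k by simp
  have rk: "r ^ (2*k) = (real k / 2) ^ k" by (simp add: power_mult r2)
  have a: "(sqrt (r/13))\<^sup>2 = r/13" using r by simp
  have b: "(exp (r\<^sup>2))\<^sup>2 = exp (real k)"
  proof -
    have "(exp (r\<^sup>2))\<^sup>2 = exp (r\<^sup>2 + r\<^sup>2)" by (simp add: power2_eq_square exp_add[symmetric])
    also have "r\<^sup>2 + r\<^sup>2 = real k" using r2 by simp
    finally show ?thesis .
  qed
  have c: "(x^k)\<^sup>2 = (x\<^sup>2)^k" by (simp add: power_mult[symmetric] mult.commute)
  have d: "(r^k)\<^sup>2 = real k ^ k / 2 ^ k"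
  proof -
    have "(r^k)\<^sup>2 = (r\<^sup>2)^k" by (simp add: power_mult[symmetric] mult.commute)
    then show ?thesis unfolding r2 by (simp add: power_divide)
  qed
  have m: "(2*x\<^sup>2)^k = 2^k * (x\<^sup>2)^k" by (simp add: power_mult_distrib)
  have "A\<^sup>2 = 2\<^sup>2 * (exp (r\<^sup>2))\<^sup>2 * (x^k)\<^sup>2 / ((sqrt (r/13))\<^sup>2 * (r^k)\<^sup>2)"
    unfolding A_def by (simp only: power_divide power_mult_distrib)
  also have "\<dots> = 4 * exp (real k) * (x\<^sup>2)^k / (r/13 * (real k ^ k / 2 ^ k))"
    unfolding a b c d by simp
  also have "\<dots> = (52 * exp (real k) * fact k / (r * real k ^ k)) * (2^k * (x\<^sup>2)^k / fact k)"
  proof -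
    have "real k ^ k > 0" "(2::real)^k > 0" "fact k > (0::real)" using kp by auto
    then show ?thesis using r by (simp add: field_simps)
  qed
  also have "\<dots> = (52 * exp (real k) * fact k / (r * real k ^ k)) * ((2*x\<^sup>2)^k / fact k)"
    unfolding m ..
  also have "\<dots> \<le> 256 * ((2*x\<^sup>2)^k / fact k)"
  proof (rule mult_right_mono)
    show "52 * exp (real k) * fact k / (r * real k ^ k) \<le> 256"
      using key_K[OF k] r kp by (simp add: r_def[symmetric] field_simps)
  qed simp
  finally have "A\<^sup>2 \<le> 256 * ((2*x\<^sup>2)^k / fact k)" .
  then have "A \<le> sqrt (256 * ((2*x\<^sup>2)^k / fact k))" by (rule real_le_rsqrt)
  also have "\<dots> = 16 * sqrt ((2*x\<^sup>2)^k / fact k)"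
  proof -
    have "sqrt (256::real) = 16" by (rule real_sqrt_unique) auto
    then show ?thesis by (simp only: real_sqrt_mult)
  qed
  finally have "A \<le> 16 * sqrt ((2*x\<^sup>2)^k / fact k)" .
  then have "exp (l\<^sup>2/2) * A \<le> exp (l\<^sup>2/2) * (16 * sqrt ((2*x\<^sup>2)^k / fact k))"
    by (intro mult_left_mono) auto
  from order_trans[OF step1 this] show ?thesis by (simp only: mult_ac)
qed


lemma arctan_step:
  fixes s u :: real assumes s: "s \<ge> 1"
  shows "1 / (3 * (1 + (u/s)\<^sup>2)) \<le> s * (arctan ((u + 1)/s) - arctan (u/s))"
proof -
  have sp: "s > 0" using s by simp
  have ab: "u/s < (u+1)/s" using sp by (simp add: divide_strict_right_mono)
  obtain z where z: "u/s < z" "z < (u+1)/s"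
    and eq: "arctan ((u+1)/s) - arctan (u/s) = ((u+1)/s - u/s) * inverse (1 + z\<^sup>2)"
    using MVT2[OF ab, of arctan "\<lambda>x. inverse (1 + x\<^sup>2)"] by (auto intro: DERIV_arctan)
  have h: "(u+1)/s - u/s = 1/s" by (simp add: diff_divide_distrib[symmetric])
  have h1: "1/s \<le> 1" using s by simp
  define a where "a = u/s"
  have za: "0 \<le> z - a" "z - a \<le> 1" using z h h1 unfolding a_def by auto
  have "z\<^sup>2 \<le> 2*a\<^sup>2 + 2*(z-a)\<^sup>2"
  proof -
    have "0 \<le> (a - (z - a))\<^sup>2" by simp
    then show ?thesis by (simp add: power2_eq_square algebra_simps)
  qed
  also have "(z-a)\<^sup>2 \<le> 1" using za by (simp add: power_le_one)
  then have "2*a\<^sup>2 + 2*(z-a)\<^sup>2 \<le> 2*a\<^sup>2 + 2" by simp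
  finally have "z\<^sup>2 \<le> 2*a\<^sup>2 + 2" .
  then have "1 + z\<^sup>2 \<le> 3 + 3 * a\<^sup>2" using zero_le_power2[of a] by linarith
  then have zz: "1 + z\<^sup>2 \<le> 3 * (1 + a\<^sup>2)" by (simp add: algebra_simps)
  have "s * (arctan ((u + 1)/s) - arctan (u/s)) = 1 / (1 + z\<^sup>2)"
    unfolding eq h using sp by (simp add: divide_inverse)
  also have "1 / (3 * (1 + a\<^sup>2)) \<le> 1 / (1 + z\<^sup>2)"
  proof (rule divide_left_mono[OF zz])
    have "0 < 3 * (1 + a\<^sup>2)" by (intro mult_pos_pos add_pos_nonneg) auto
    moreover have "0 < 1 + z\<^sup>2" by (intro add_pos_nonneg) auto
    ultimately show "0 < 3 * (1 + a\<^sup>2) * (1 + z\<^sup>2)" by simp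
  qed simp
  finally show ?thesis unfolding a_def by simp
qed

lemma sum_d_bound:
  fixes s m :: real assumes s: "s > 0"
  shows "(\<Sum>k<N. s * (arctan ((real k - m + 1)/s) - arctan ((real k - m)/s))) \<le> pi * s"
proof -
  have "(\<Sum>k<N. s * (arctan ((real k - m + 1)/s) - arctan ((real k - m)/s)))
     = s * (\<Sum>k<N. arctan ((real (Suc k) - m)/s) - arctan ((real k - m)/s))"
    by (simp add: sum_distrib_left algebra_simps)
  also have "\<dots> = s * (arctan ((real N - m)/s) - arctan ((real 0 - m)/s))"
    by (subst sum_lessThan_telescope[where f = "\<lambda>k. arctan ((real k - m)/s)"]) simp
  also have "\<dots> \<le> s * pi"
    using arctan_bounded[of "(real N - m)/s"] arctan_bounded[of "(real 0 - m)/s"] s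
    by (intro mult_left_mono) auto
  finally show ?thesis by (simp add: mult.commute)
qed

lemma poisson_sums:
  fixes m :: real
  shows "(\<lambda>k. m^k / fact k) sums exp m"
    and "(\<lambda>k. real k * (m^k / fact k)) sums (m * exp m)"
    and "(\<lambda>k. real k * (real k - 1) * (m^k / fact k)) sums (m * (m * exp m))"
proof -
  show S0: "(\<lambda>k. m^k / fact k) sums exp m"
    using exp_converges[of m] by (simp add: divide_inverse mult.commute)
  have "(\<lambda>n. real (Suc n) * (m^(Suc n) / fact (Suc n))) sums (m * exp m)"
  proof -
    have "(\<lambda>n. m * (m^n / fact n)) sums (m * exp m)" by (rule sums_mult[OF S0])
    moreover have "real (Suc n) * (m^(Suc n) / fact (Suc n)) = m * (m^n / fact n)" for n
      by (simp add: field_simps del: of_nat_Suc)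
    ultimately show ?thesis by simp
  qed
  then show S1: "(\<lambda>k. real k * (m^k / fact k)) sums (m * exp m)"
    by (subst (asm) sums_Suc_iff) simp
  have "(\<lambda>n. real (Suc n) * (real (Suc n) - 1) * (m^(Suc n) / fact (Suc n))) sums (m * (m * exp m))"
  proof -
    have "(\<lambda>n. m * (real n * (m^n / fact n))) sums (m * (m * exp m))" by (rule sums_mult[OF S1])
    moreover have "real (Suc n) * (real (Suc n) - 1) * (m^(Suc n) / fact (Suc n)) = m * (real n * (m^n / fact n))" for n
    proof -
      have e1: "real (Suc n) * (m^(Suc n) / fact (Suc n)) = m * (m^n / fact n)"
        by (simp add: field_simps del: of_nat_Suc)
      have "real (Suc n) * (real (Suc n) - 1) * (m^(Suc n) / fact (Suc n))
          = real n * (real (Suc n) * (m^(Suc n) / fact (Suc n)))" by simp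
      then show ?thesis unfolding e1 by simp
    qed
    ultimately show ?thesis by (simp only:)
  qed
  then show "(\<lambda>k. real k * (real k - 1) * (m^k / fact k)) sums (m * (m * exp m))"
    by (subst (asm) sums_Suc_iff) simp
qed

lemma poisson_weighted:
  fixes m s :: real assumes m: "m \<ge> 0" and s: "s\<^sup>2 = m + 1"
  shows "(\<Sum>k<N. m^k / fact k * (1 + ((real k - m)/s)\<^sup>2)) \<le> 2 * exp m"
proof -
  have sp: "s\<^sup>2 > 0" using s m by simp
  define A where "A = (\<lambda>k. m^k / fact k)"
  have "(\<lambda>k. A k + (1/s\<^sup>2) * (real k * (real k - 1) * A k + (1 - 2*m) * (real k * A k) + m\<^sup>2 * A k))
      sums (exp m + (1/s\<^sup>2) * (m * (m * exp m) + (1 - 2*m) * (m * exp m) + m\<^sup>2 * exp m))"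
    unfolding A_def
    by (intro sums_add sums_mult poisson_sums)
  moreover have "A k + (1/s\<^sup>2) * (real k * (real k - 1) * A k + (1 - 2*m) * (real k * A k) + m\<^sup>2 * A k)
      = m^k / fact k * (1 + ((real k - m)/s)\<^sup>2)" for k
  proof -
    have "fact k > (0::real)" by simp
    moreover have "s \<noteq> 0" using sp by auto
    ultimately show ?thesis unfolding A_def by (simp add: field_simps power2_eq_square)
  qed
  moreover have "exp m + (1/s\<^sup>2) * (m * (m * exp m) + (1 - 2*m) * (m * exp m) + m\<^sup>2 * exp m)
      = exp m * (1 + m / s\<^sup>2)"
    using sp by (simp add: field_simps power2_eq_square)
  ultimately have S: "(\<lambda>k. m^k / fact k * (1 + ((real k - m)/s)\<^sup>2)) sums (exp m * (1 + m / s\<^sup>2))"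
    by simp
  have "(\<Sum>k<N. m^k / fact k * (1 + ((real k - m)/s)\<^sup>2)) \<le> (\<Sum>k. m^k / fact k * (1 + ((real k - m)/s)\<^sup>2))"
    using S m by (intro sum_le_suminf) (auto simp: sums_summable)
  also have "\<dots> = exp m * (1 + m / s\<^sup>2)" using S by (simp add: sums_unique[symmetric])
  also have "\<dots> \<le> exp m * 2"
  proof -
    have "m / s\<^sup>2 \<le> 1" using s m by simp
    then show ?thesis by (intro mult_left_mono) auto
  qed
  finally show ?thesis by simp
qed


lemma sqrt_sum_bound:
  fixes m :: real assumes m: "m \<ge> 0"
  shows "(\<Sum>k<N. sqrt (m^k / fact k)) \<le> sqrt (6 * pi * sqrt (m + 1) * exp m)"
proof -
  define s where "s = sqrt (m + 1)"
  have s1: "s \<ge> 1" using m by (simp add: s_def)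
  have s2: "s\<^sup>2 = m + 1" using m by (simp add: s_def)
  define p where "p = (\<lambda>k::nat. m^k / fact k)"
  define d where "d = (\<lambda>k::nat. s * (arctan ((real k - m + 1)/s) - arctan ((real k - m)/s)))"
  define w where "w = (\<lambda>k::nat. 1 + ((real k - m)/s)\<^sup>2)"
  have w0: "w k > 0" for k unfolding w_def by (intro add_pos_nonneg) auto
  have dlow: "1 / (3 * w k) \<le> d k" for k
    unfolding d_def w_def using arctan_step[OF s1, of "real k - m"] by simp
  have d0: "d k > 0" for k
  proof -
    have "0 < 1 / (3 * w k)" using w0[of k] by simp
    then show ?thesis using dlow[of k] by (rule order_less_le_trans)
  qed
  have p0: "p k \<ge> 0" for k using m by (simp add: p_def)
  have pd: "p k / d k \<le> 3 * (p k * w k)" for k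
  proof -
    have "1 / d k \<le> 3 * w k"
    proof -
      have "1 / d k \<le> 1 / (1 / (3 * w k))"
        using dlow[of k] w0[of k] d0[of k] by (intro divide_left_mono) auto
      then show ?thesis by simp
    qed
    then have "p k * (1 / d k) \<le> p k * (3 * w k)" using p0[of k] by (intro mult_left_mono) auto
    then show ?thesis by (simp add: mult_ac)
  qed
  have sp: "sqrt (p k) = sqrt (p k / d k) * sqrt (d k)" for k
    using d0[of k] by (simp add: real_sqrt_mult[symmetric])
  have "(\<Sum>k<N. sqrt (p k))\<^sup>2 = (\<Sum>k<N. sqrt (p k / d k) * sqrt (d k))\<^sup>2"
    by (simp add: sp)
  also have "\<dots> \<le> (\<Sum>k<N. (sqrt (p k / d k))\<^sup>2) * (\<Sum>k<N. (sqrt (d k))\<^sup>2)"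
    by (rule Cauchy_Schwarz_ineq_sum)
  also have "\<dots> = (\<Sum>k<N. p k / d k) * (\<Sum>k<N. d k)"
  proof -
    have "(\<Sum>k<N. (sqrt (p k / d k))\<^sup>2) = (\<Sum>k<N. p k / d k)"
      using p0 d0 by (intro sum.cong) (auto simp: less_imp_le)
    moreover have "(\<Sum>k<N. (sqrt (d k))\<^sup>2) = (\<Sum>k<N. d k)"
      using d0 by (intro sum.cong) (auto simp: less_imp_le)
    ultimately show ?thesis by simp
  qed
  finally have A: "(\<Sum>k<N. sqrt (p k))\<^sup>2 \<le> (\<Sum>k<N. p k / d k) * (\<Sum>k<N. d k)" .
  have "(\<Sum>k<N. p k / d k) \<le> 3 * (\<Sum>k<N. p k * w k)"
    unfolding sum_distrib_left by (intro sum_mono pd)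
  also have "\<dots> \<le> 3 * (2 * exp m)"
    unfolding p_def w_def using poisson_weighted[OF m s2] by simp
  finally have B: "(\<Sum>k<N. p k / d k) \<le> 6 * exp m" by simp
  have C: "(\<Sum>k<N. d k) \<le> pi * s"
    unfolding d_def using s1 by (intro sum_d_bound) auto
  have B0: "0 \<le> (\<Sum>k<N. p k / d k)" using p0 d0 by (intro sum_nonneg divide_nonneg_nonneg) (auto simp: less_imp_le)
  have "(\<Sum>k<N. p k / d k) * (\<Sum>k<N. d k) \<le> (6 * exp m) * (pi * s)"
  proof (rule mult_mono[OF B C])
    show "0 \<le> (\<Sum>k<N. d k)" using d0 by (intro sum_nonneg) (auto simp: less_imp_le)
  qed simp
  with A have "(\<Sum>k<N. sqrt (p k))\<^sup>2 \<le> 6 * pi * sqrt (m + 1) * exp m"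
    by (simp add: s_def mult_ac)
  then show ?thesis unfolding p_def by (rule real_le_rsqrt)
qed


lemma term_bound_all:
  fixes x l :: real assumes x: "x \<ge> 0"
  shows "\<bar>hermite k l\<bar> / fact k * x^k \<le> 16 * exp (l\<^sup>2/2) * sqrt ((2*x\<^sup>2)^k / fact k)"
proof (cases "k = 0")
  case True
  have "hermite 0 l = 1" by (simp add: hermite_hp)
  moreover have "1 \<le> exp (l\<^sup>2/2)" by simp
  then have "1 \<le> 16 * exp (l\<^sup>2/2)" by linarith
  ultimately show ?thesis using True by simp
next
  case False
  then show ?thesis using term_bound[OF x, of k l] by simp
qed

lemma final_numeric:
  fixes x :: real assumes x: "x \<ge> 0"
  shows "16 * sqrt (6 * pi * sqrt (2*x\<^sup>2 + 1) * exp (2*x\<^sup>2)) \<le> 112 * sqrt (1 + x) * exp (x\<^sup>2)"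
proof -
  have s: "sqrt (2*x\<^sup>2 + 1) \<le> 2 * (1 + x)"
  proof (rule real_le_lsqrt)
    show "2*x\<^sup>2 + 1 \<le> (2 * (1 + x))\<^sup>2" using x by (simp add: power2_eq_square algebra_simps)
  qed (use x in auto)
  have "6 * pi * sqrt (2*x\<^sup>2 + 1) \<le> 6 * 4 * (2 * (1 + x))"
    using s pi_less_4 by (intro mult_mono) auto
  then have "6 * pi * sqrt (2*x\<^sup>2 + 1) \<le> 49 * (1 + x)" using x by simp
  then have "6 * pi * sqrt (2*x\<^sup>2 + 1) * exp (2*x\<^sup>2) \<le> 49 * (1 + x) * exp (2*x\<^sup>2)"
    by (intro mult_right_mono) auto
  then have "sqrt (6 * pi * sqrt (2*x\<^sup>2 + 1) * exp (2*x\<^sup>2)) \<le> sqrt (49 * (1 + x) * exp (2*x\<^sup>2))"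
    by (rule real_sqrt_le_mono)
  also have "\<dots> = 7 * sqrt (1 + x) * exp (x\<^sup>2)"
  proof -
    have s49: "sqrt (49::real) = 7" by (rule real_sqrt_unique) auto
    have se: "sqrt (exp (2*x\<^sup>2)) = exp (x\<^sup>2)"
    proof -
      have e: "2*x\<^sup>2 = x\<^sup>2 + x\<^sup>2" by simp
      have "exp (2*x\<^sup>2) = (exp (x\<^sup>2))\<^sup>2" by (subst e) (simp only: exp_add power2_eq_square[of "exp (x\<^sup>2)"])
      then show ?thesis by simp
    qed
    show ?thesis by (simp only: real_sqrt_mult s49 se)
  qed
  finally show ?thesis by simp
qed

theorem lemma8:
  shows "\<exists>C>0. \<forall>(l::real) (x::real). x \<ge> 0 \<longrightarrow>
           summable (\<lambda>k. \<bar>hermite k l\<bar> / fact k * x ^ k) \<and>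
           (\<Sum>k. \<bar>hermite k l\<bar> / fact k * x ^ k)
             \<le> C * sqrt (1 + x) * exp (x\<^sup>2 + l\<^sup>2 / 2)"
proof (intro exI[of _ 112] conjI allI impI)
  show "(0::real) < 112" by simp
  fix l x :: real assume x: "x \<ge> 0"
  define f where "f = (\<lambda>k. \<bar>hermite k l\<bar> / fact k * x ^ k)"
  define B where "B = 112 * sqrt (1 + x) * exp (x\<^sup>2 + l\<^sup>2 / 2)"
  have f0: "f k \<ge> 0" for k using x by (simp add: f_def)
  have part: "sum f {..<N} \<le> B" for N
  proof -
    have "sum f {..<N} \<le> (\<Sum>k<N. 16 * exp (l\<^sup>2/2) * sqrt ((2*x\<^sup>2)^k / fact k))"
      unfolding f_def using x by (intro sum_mono term_bound_all)
    also have "\<dots> = 16 * exp (l\<^sup>2/2) * (\<Sum>k<N. sqrt ((2*x\<^sup>2)^k / fact k))"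
      by (simp add: sum_distrib_left)
    also have "\<dots> \<le> 16 * exp (l\<^sup>2/2) * sqrt (6 * pi * sqrt (2*x\<^sup>2 + 1) * exp (2*x\<^sup>2))"
      by (intro mult_left_mono sqrt_sum_bound) auto
    also have "\<dots> = exp (l\<^sup>2/2) * (16 * sqrt (6 * pi * sqrt (2*x\<^sup>2 + 1) * exp (2*x\<^sup>2)))" by simp
    also have "\<dots> \<le> exp (l\<^sup>2/2) * (112 * sqrt (1 + x) * exp (x\<^sup>2))"
      by (intro mult_left_mono final_numeric x) auto
    also have "\<dots> = B" by (simp add: B_def exp_add)
    finally show ?thesis .
  qed
  have summ: "summable f"
  proof (rule bounded_imp_summable[OF f0])
    fix n show "(\<Sum>k\<le>n. f k) \<le> B" using part[of "Suc n"] by (simp add: lessThan_Suc_atMost)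
  qed
  show "summable (\<lambda>k. \<bar>hermite k l\<bar> / fact k * x ^ k)" using summ by (simp add: f_def)
  have "suminf f \<le> B" by (rule suminf_le_const[OF summ part])
  then show "(\<Sum>k. \<bar>hermite k l\<bar> / fact k * x ^ k) \<le> 112 * sqrt (1 + x) * exp (x\<^sup>2 + l\<^sup>2 / 2)"
    by (simp add: f_def B_def)
qed


end
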